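(* Let $d\geq2$, $R>0$, $\delta>0$. There exists a constant $C>0$ depending only on $\delta$ and $R$ such that the following holds. Let $X^+,X^-\subset R\mathbb{B}_2^d$ be two $\delta$-separated finite sets, $N:=|X^+|+|X^-|$, let $x_1,\dots,x_N$ enumerate $X^+\cup X^-$ in nonincreasing order of norm, and let $\sigma(x)=\pm1$ according as $x\in X^\pm$. Let \[ k:=C\left(\frac{32R}{\delta^2}\right)^2\left(w^2\big((X^+-X^-)\cup X^+\cup X^-\big)+R^2\right), \] and let $\gamma\in(0,\max(\delta^2/(8Rd),\delta^2/(18R\sqrt k))]$. Suppose $w_1,\dots,w_N\in\mathbb{S}^{d-1}$ and $b_1,\dots,b_N\in\mathbb{R}$ are such that, for each $i$: if there is some $j>i$ with $\sigma(x_j)\neq\sigma(x_i)$, then $w_i^Tx_i+b_i\geq\gamma$ and $w_i^Tx_j+b_i\leq-\gamma$ for all $j>i$ with $\sigma(x_j)\neq\sigma(x_i)$; otherwise $w_i^Tx_i+b_i\geq\gamma$ and $w_i^Tx+b_i\leq0$ for some $x\in R\mathbb{B}_2^d$. Let $W$ be the $N\times d$ matrix with rows $w_i^T$, $b=(b_i)_i$, and $\Phi(x)=\mathrm{ReLU}(Wx+b)$. Then $\Phi(X^+)$ and $\Phi(X^-)$ are linearly separable with margin at least $\sqrt N\,\mathcal{M}(\gamma,N)$, where \[ \mathcal{M}(\gamma,N):=\sqrt{\frac{4R(R+\gamma)}{N(1+2R/\gamma)^{2N}-N}}. \]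
   Context: $\|\cdot\|$ Euclidean norm, $R\mathbb{B}_2^d$ closed ball of radius $R$ at $0$, $\mathbb{S}^{d-1}$ unit sphere, $\mathrm{ReLU}(x)=\max(x,0)$ coordinatewise. $\delta$-separated: $\|x^+-x^-\|\geq\delta$ for all $x^\pm\in X^\pm$. $X^+-X^-:=\{x^+-x^-\}$. Gaussian width $w(T):=\mathbb{E}\sup_{x\in T}g^Tx$, $g\sim\mathcal N(0,I_d)$. $S^+,S^-\subset\mathbb{R}^N$ are linearly separable with margin at least $m$ if there exist nonzero $a\in\mathbb{R}^N$, $c\in\mathbb{R}$ with $a^Ts+c>0$ on $S^+$, $<0$ on $S^-$, and $\inf\{|a^Ts+c|/\|a\|:s\in S^+\cup S^-\}\geq m$. (The network described is any output of the paper's Algorithm 1.) *)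

theory Defs
  imports "HOL-Probability.Probability"
begin

text \<open>Euclidean space R^d is represented explicitly (so that the dimension d can be
quantified inside the statement, after the constant C): a point of R^d is a function
nat => real vanishing at all indices i >= d.\<close>

definition rvecs :: "nat \<Rightarrow> (nat \<Rightarrow> real) set" where
  "rvecs d = {x. \<forall>i\<ge>d. x i = 0}"

definition dinner :: "nat \<Rightarrow> (nat \<Rightarrow> real) \<Rightarrow> (nat \<Rightarrow> real) \<Rightarrow> real" where
  "dinner d x y = (\<Sum>i<d. x i * y i)"

definition dnorm :: "nat \<Rightarrow> (nat \<Rightarrow> real) \<Rightarrow> real" where
  "dnorm d x = sqrt (dinner d x x)"

definition std_gauss :: "nat \<Rightarrow> (nat \<Rightarrow> real) measure" where
  "std_gauss d = PiM {..<d} (\<lambda>_. density lborel (\<lambda>t. ennreal (std_normal_density t)))"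

definition gaussian_width :: "nat \<Rightarrow> (nat \<Rightarrow> real) set \<Rightarrow> real" where
  "gaussian_width d T = (\<integral>g. (SUP x\<in>T. dinner d g x) \<partial>std_gauss d)"

definition delta_separated :: "nat \<Rightarrow> real \<Rightarrow> (nat \<Rightarrow> real) set \<Rightarrow> (nat \<Rightarrow> real) set \<Rightarrow> bool" where
  "delta_separated d \<delta> Xp Xm = (\<forall>p\<in>Xp. \<forall>q\<in>Xm. dnorm d (\<lambda>i. p i - q i) \<ge> \<delta>)"

definition set_diff_vec :: "(nat \<Rightarrow> real) set \<Rightarrow> (nat \<Rightarrow> real) set \<Rightarrow> (nat \<Rightarrow> real) set" where
  "set_diff_vec A B = {(\<lambda>i. p i - q i) | p q. p \<in> A \<and> q \<in> B}"

definition lin_sep_margin :: "nat \<Rightarrow> (nat \<Rightarrow> real) set \<Rightarrow> (nat \<Rightarrow> real) set \<Rightarrow> real \<Rightarrow> bool" where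
  "lin_sep_margin N Sp Sm m =
    (\<exists>a c. a \<in> rvecs N \<and> (\<exists>i<N. a i \<noteq> 0) \<and>
       (\<forall>s\<in>Sp. dinner N a s + c > 0) \<and>
       (\<forall>s\<in>Sm. dinner N a s + c < 0) \<and>
       (\<forall>s\<in>Sp \<union> Sm. \<bar>dinner N a s + c\<bar> / dnorm N a \<ge> m))"

definition relu_map :: "nat \<Rightarrow> nat \<Rightarrow> (nat \<Rightarrow> nat \<Rightarrow> real) \<Rightarrow> (nat \<Rightarrow> real) \<Rightarrow> (nat \<Rightarrow> real) \<Rightarrow> (nat \<Rightarrow> real)" where
  "relu_map d N w b x = (\<lambda>i. if i < N then max (dinner d (w i) x + b i) 0 else 0)"

definition margin_M :: "real \<Rightarrow> real \<Rightarrow> nat \<Rightarrow> real" where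
  "margin_M R \<gamma> N = sqrt (4 * R * (R + \<gamma>) / (real N * (1 + 2 * R / \<gamma>) ^ (2 * N) - real N))"

end

theory Submission
  imports Defs
begin


lemma dinner_cs: "\<bar>dinner d u v\<bar> \<le> dnorm d u * dnorm d v"
proof -
  have "\<bar>dinner d u v\<bar> \<le> (\<Sum>i<d. \<bar>u i\<bar> * \<bar>v i\<bar>)"
    unfolding dinner_def by (metis (no_types, lifting) abs_mult sum.cong sum_abs)
  also have "\<dots> \<le> L2_set u {..<d} * L2_set v {..<d}" by (rule L2_set_mult_ineq)
  also have "\<dots> = dnorm d u * dnorm d v"
    unfolding L2_set_def dnorm_def dinner_def by (simp add: power2_eq_square)
  finally show ?thesis .
qed

lemma geom_sum: "((q::real) - 1) * (\<Sum>i<n. q^i) = q^n - 1"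
  by (induction n) (auto simp: algebra_simps)

lemma tail_reindex:
  assumes "j < N"
  shows "(\<Sum>i\<in>{j<..<N}. (q::real)^(N-1-i)) = (\<Sum>m<N-1-j. q^m)"
  by (rule sum.reindex_bij_witness[where i="\<lambda>m. N-1-m" and j="\<lambda>i. N-1-i"]) (use assms in auto)

lemma key:
  fixes phi :: "nat \<Rightarrow> nat \<Rightarrow> real" and s :: "nat \<Rightarrow> real" and \<gamma> R q :: real
  assumes gp: "\<gamma> > 0" and Rp: "R > 0" and qdef: "q = 1 + 2*R/\<gamma>" and jN: "j < N"
    and nn: "\<And>i. i < N \<Longrightarrow> phi i j \<ge> 0"
    and ub: "\<And>i. i < N \<Longrightarrow> phi i j \<le> 2*R"
    and diag: "phi j j \<ge> \<gamma>"
    and opp: "\<And>i. i < j \<Longrightarrow> s i \<noteq> s j \<Longrightarrow> phi i j = 0"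
    and sv: "\<And>i. s i = 1 \<or> s i = -1"
  shows "s j * (\<Sum>i<N. s i * q^(N-1-i) * phi i j) \<ge> \<gamma>"
proof -
  have q1: "q \<ge> 1" using qdef gp Rp by simp
  have ss: "s j * s j = 1" using sv[of j] by auto
  have dec: "{..<N} = {..<j} \<union> ({j} \<union> {j<..<N})" using jN by auto
  have "s j * (\<Sum>i<N. s i * q^(N-1-i) * phi i j) = (\<Sum>i<N. s j * s i * q^(N-1-i) * phi i j)"
    by (simp add: sum_distrib_left mult.assoc)
  also have "\<dots> = (\<Sum>i<j. s j * s i * q^(N-1-i) * phi i j) + (s j * s j * q^(N-1-j) * phi j j
      + (\<Sum>i\<in>{j<..<N}. s j * s i * q^(N-1-i) * phi i j))"
    unfolding dec by (subst sum.union_disjoint; auto)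
  finally have eq: "s j * (\<Sum>i<N. s i * q^(N-1-i) * phi i j) = \<dots>" .
  have A: "(\<Sum>i<j. s j * s i * q^(N-1-i) * phi i j) \<ge> 0"
  proof (rule sum_nonneg)
    fix i assume i: "i \<in> {..<j}"
    show "0 \<le> s j * s i * q^(N-1-i) * phi i j"
    proof (cases "s i = s j")
      case True
      then show ?thesis using ss nn[of i] i jN q1 by simp
    next
      case False
      then show ?thesis using opp[of i] i by simp
    qed
  qed
  have B: "s j * s j * q^(N-1-j) * phi j j \<ge> q^(N-1-j) * \<gamma>"
    using ss diag q1 by simp
  have C: "(\<Sum>i\<in>{j<..<N}. s j * s i * q^(N-1-i) * phi i j) \<ge> (\<Sum>i\<in>{j<..<N}. - (2*R) * q^(N-1-i))"
  proof (rule sum_mono)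
    fix i assume i: "i \<in> {j<..<N}"
    have "\<bar>s j * s i\<bar> = 1" using sv[of i] sv[of j] by auto
    moreover have "0 \<le> phi i j" "phi i j \<le> 2*R" using nn[of i] ub[of i] i by auto
    moreover have "q^(N-1-i) > 0" using q1 by simp
    ultimately have h1: "0 \<le> q^(N-1-i) * phi i j" "q^(N-1-i) * phi i j \<le> q^(N-1-i) * (2*R)"
      by (auto intro: mult_left_mono)
    have h2: "0 \<le> 2*R*q^(N-1-i)" using Rp q1 by simp
    show "- (2*R) * q^(N-1-i) \<le> s j * s i * q^(N-1-i) * phi i j"
      using sv[of i] sv[of j] h1 h2 by (auto simp: algebra_simps)
  qed
  have D: "(\<Sum>i\<in>{j<..<N}. - (2*R) * q^(N-1-i)) = - \<gamma> * (q^(N-1-j) - 1)"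
  proof -
    have "(\<Sum>i\<in>{j<..<N}. - (2*R) * q^(N-1-i)) = - (2*R) * (\<Sum>m<N-1-j. q^m)"
      using tail_reindex[OF jN, of q] by (simp only: sum_distrib_left[symmetric])
    also have "\<dots> = - \<gamma> * ((q - 1) * (\<Sum>m<N-1-j. q^m))"
    proof -
      have "\<gamma> * (q - 1) = 2*R" using qdef gp by (simp add: field_simps)
      then show ?thesis by (metis minus_mult_left mult.assoc)
    qed
    also have "\<dots> = - \<gamma> * (q^(N-1-j) - 1)" by (simp only: geom_sum)
    finally show ?thesis .
  qed
  show ?thesis using eq A B C D by (simp add: algebra_simps)
qed


lemma main_aux:
  fixes \<delta> R \<gamma> :: real
  assumes dp: "\<delta> > 0" and Rp: "R > 0" and fXp: "finite Xp" and fXm: "finite Xm"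
    and ne: "Xp \<union> Xm \<noteq> {}"
    and nrm: "\<forall>x\<in>Xp \<union> Xm. dnorm d x \<le> R"
    and sep: "delta_separated d \<delta> Xp Xm"
    and Ndef: "N = card Xp + card Xm"
    and bij: "bij_betw xs {..<N} (Xp \<union> Xm)"
    and gp: "0 < \<gamma>"
    and wn: "\<forall>i<N. w i \<in> rvecs d \<and> dnorm d (w i) = 1"
    and cond: "\<forall>i<N.
       if (\<exists>j. i < j \<and> j < N \<and> (xs j \<in> Xp \<longleftrightarrow> xs i \<notin> Xp))
       then dinner d (w i) (xs i) + b i \<ge> \<gamma> \<and>
            (\<forall>j. i < j \<and> j < N \<and> (xs j \<in> Xp \<longleftrightarrow> xs i \<notin> Xp) \<longrightarrow>
                 dinner d (w i) (xs j) + b i \<le> - \<gamma>)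
       else dinner d (w i) (xs i) + b i \<ge> \<gamma> \<and>
            (\<exists>x\<in>rvecs d. dnorm d x \<le> R \<and> dinner d (w i) x + b i \<le> 0)"
  shows "lin_sep_margin N (relu_map d N w b ` Xp) (relu_map d N w b ` Xm)
          (sqrt (real N) * margin_M R \<gamma> N)"
proof -
  define \<sigma> where "\<sigma> j = (if xs j \<in> Xp then 1 else -1::real)" for j
  define q where "q = 1 + 2*R/\<gamma>"
  define a where "a i = (if i < N then \<sigma> i * q^(N-1-i) else 0)" for i
  define phi where "phi i j = max (dinner d (w i) (xs j) + b i) 0" for i j
  have q1: "q > 1" using q_def gp Rp by simp
  have disj: "Xp \<inter> Xm = {}"
  proof (rule ccontr)
    assume "Xp \<inter> Xm \<noteq> {}"
    then obtain p where "p \<in> Xp" "p \<in> Xm" by blast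
    with sep have "dnorm d (\<lambda>i. p i - p i) \<ge> \<delta>" unfolding delta_separated_def by blast
    then show False using dp by (simp add: dnorm_def dinner_def)
  qed
  have xsin: "xs j \<in> Xp \<union> Xm" if "j < N" for j
    using bij that by (auto dest: bij_betw_apply)
  have xsn: "dnorm d (xs j) \<le> R" if "j < N" for j using nrm xsin[OF that] by blast
  have dle: "dinner d (w i) x \<le> dnorm d x" "- dnorm d x \<le> dinner d (w i) x" if "i < N" for i x
    using dinner_cs[of d "w i" x] wn that by auto
  have bR: "b i \<le> R" if i: "i < N" for i
  proof (cases "\<exists>j. i < j \<and> j < N \<and> (xs j \<in> Xp \<longleftrightarrow> xs i \<notin> Xp)")
    case True
    then obtain j where j: "i < j" "j < N" "(xs j \<in> Xp \<longleftrightarrow> xs i \<notin> Xp)" by blast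
    with cond i True have "dinner d (w i) (xs j) + b i \<le> - \<gamma>" by auto
    moreover have "- R \<le> dinner d (w i) (xs j)" using dle(2)[OF i, of "xs j"] xsn[OF j(2)] by linarith
    ultimately show ?thesis using gp Rp by linarith
  next
    case False
    have "\<exists>x\<in>rvecs d. dnorm d x \<le> R \<and> dinner d (w i) x + b i \<le> 0"
      using cond[rule_format, OF i] False by (simp only: if_False)
    then obtain x where "dnorm d x \<le> R" "dinner d (w i) x + b i \<le> 0" by blast
    moreover have "- dnorm d x \<le> dinner d (w i) x" using dle(2)[OF i] .
    ultimately show ?thesis by linarith
  qed
  have sv: "\<sigma> i = 1 \<or> \<sigma> i = -1" for i unfolding \<sigma>_def by auto
  have keyj: "\<sigma> j * (\<Sum>i<N. \<sigma> i * q^(N-1-i) * phi i j) \<ge> \<gamma>" if jN: "j < N" for j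
  proof (rule key[OF gp Rp q_def jN])
    show "\<And>i. i < N \<Longrightarrow> 0 \<le> phi i j" unfolding phi_def by simp
    show "phi i j \<le> 2 * R" if "i < N" for i
      using dle(1)[OF that, of "xs j"] xsn[OF jN] bR[OF that] Rp unfolding phi_def by simp
    show "\<gamma> \<le> phi j j" using cond jN unfolding phi_def by (auto split: if_splits)
    show "phi i j = 0" if "i < j" "\<sigma> i \<noteq> \<sigma> j" for i
    proof -
      have "(xs j \<in> Xp \<longleftrightarrow> xs i \<notin> Xp)" using that(2) unfolding \<sigma>_def by (auto split: if_splits)
      then have "dinner d (w i) (xs j) + b i \<le> - \<gamma>" using cond that(1) jN
        by (smt (verit, best) order.strict_trans)
      then show ?thesis unfolding phi_def using gp by simp
    qed
    show "\<And>i. \<sigma> i = 1 \<or> \<sigma> i = -1" by (rule sv)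
  qed
  have feq: "dinner N a (relu_map d N w b (xs j)) = (\<Sum>i<N. \<sigma> i * q^(N-1-i) * phi i j)" for j
    unfolding dinner_def relu_map_def a_def phi_def by (rule sum.cong) auto
  define S where "S = (\<Sum>i<N. (q^2)^i)"
  have aa: "dinner N a a = S"
  proof -
    have "dinner N a a = (\<Sum>i<N. (q^2)^(N - Suc i))"
      unfolding dinner_def a_def
    proof (rule sum.cong)
      fix i assume "i \<in> {..<N}"
      have ss: "\<sigma> i * \<sigma> i = 1" using sv[of i] by auto
      have "\<sigma> i * q^(N-1-i) * (\<sigma> i * q^(N-1-i)) = (\<sigma> i * \<sigma> i) * (q^(N-1-i))^2"
        by (simp add: power2_eq_square)
      also have "\<dots> = (q^2)^(N - Suc i)" by (simp add: ss power_mult[symmetric] mult.commute)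
      finally show "(if i < N then \<sigma> i * q ^ (N - 1 - i) else 0) * (if i < N then \<sigma> i * q ^ (N - 1 - i) else 0) = (q^2)^(N - Suc i)"
        using \<open>i \<in> {..<N}\<close> by simp
    qed simp
    also have "\<dots> = S" unfolding S_def by (rule sum.nat_diff_reindex)
    finally show ?thesis .
  qed
  have Npos: "N > 0"
  proof -
    have "card (Xp \<union> Xm) > 0" using ne fXp fXm by (simp add: card_gt_0_iff)
    then show ?thesis using Ndef card_Un_le[of Xp Xm] by linarith
  qed
  define Q where "Q = q^(2*N)"
  have SQ: "(q^2 - 1) * S = Q - 1" unfolding S_def Q_def by (simp add: geom_sum power_mult)
  have Q1: "Q > 1" unfolding Q_def using q1 Npos by simp
  have q21: "q^2 - 1 > 0" using q1 by (simp add: power_less_one_iff) 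
  have Spos: "S > 0" using SQ Q1 q21 by (metis diff_gt_0_iff_gt zero_less_mult_pos)
  have gq: "\<gamma>^2 * (q^2 - 1) = 4*R*(R+\<gamma>)"
    unfolding q_def using gp by (simp add: field_simps power2_eq_square)
  have target: "sqrt (real N) * margin_M R \<gamma> N = \<gamma> / dnorm N a"
  proof -
    have "sqrt (real N) * margin_M R \<gamma> N = sqrt (real N * (4 * R * (R + \<gamma>) / (real N * Q - real N)))"
      unfolding margin_M_def Q_def q_def by (simp only: real_sqrt_mult)
    also have "real N * (4 * R * (R + \<gamma>) / (real N * Q - real N)) = 4*R*(R+\<gamma>) / (Q - 1)"
    proof -
      have "real N * Q - real N = real N * (Q-1)" by (simp add: algebra_simps)
      then show ?thesis using Npos by simp
    qed
    also have "\<dots> = (\<gamma>^2 * (q^2 - 1)) / ((q^2 - 1) * S)" by (simp only: gq SQ)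
    also have "\<dots> = \<gamma>^2 / S" using q21 by simp
    also have "sqrt (\<gamma>^2 / S) = \<gamma> / dnorm N a"
      unfolding dnorm_def aa using gp by (simp add: real_sqrt_divide)
    finally show ?thesis .
  qed
  have dpos: "dnorm N a > 0" unfolding dnorm_def aa using Spos by simp
  have fbound: "\<gamma> \<le> \<bar>dinner N a (relu_map d N w b (xs j)) + 0\<bar>" if "j < N" for j
    using keyj[OF that] sv[of j] unfolding feq by auto
  have marg: "sqrt (real N) * margin_M R \<gamma> N \<le> \<bar>dinner N a s + 0\<bar> / dnorm N a"
    if "s \<in> relu_map d N w b ` Xp \<union> relu_map d N w b ` Xm" for s
  proof -
    from that obtain x where x: "x \<in> Xp \<union> Xm" "s = relu_map d N w b x" by blast
    then obtain j where j: "j < N" "x = xs j" using bij unfolding bij_betw_def by auto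
    show ?thesis unfolding target using fbound[OF j(1)] x j dpos
      by (simp add: divide_right_mono)
  qed
  show ?thesis unfolding lin_sep_margin_def
  proof (rule exI[of _ a], rule exI[of _ "0::real"], intro conjI ballI)
    show "a \<in> rvecs N" unfolding rvecs_def a_def by simp
    show "\<exists>i<N. a i \<noteq> 0" using Npos q1 sv[of 0] unfolding a_def by (intro exI[of _ 0]) auto
    show "0 < dinner N a s + 0" if "s \<in> relu_map d N w b ` Xp" for s
    proof -
      from that obtain x where x: "x \<in> Xp" "s = relu_map d N w b x" by blast
      then obtain j where j: "j < N" "x = xs j" using bij unfolding bij_betw_def by auto
      have "\<sigma> j = 1" using x j unfolding \<sigma>_def by simp
      then show ?thesis using keyj[OF j(1)] x j gp feq[of j] by simp
    qed
    show "dinner N a s + 0 < 0" if "s \<in> relu_map d N w b ` Xm" for s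
    proof -
      from that obtain x where x: "x \<in> Xm" "s = relu_map d N w b x" by blast
      then obtain j where j: "j < N" "x = xs j" using bij unfolding bij_betw_def by auto
      have "\<sigma> j = -1" using x j disj unfolding \<sigma>_def by auto
      then show ?thesis using keyj[OF j(1)] x j gp feq[of j] by simp
    qed
    show "sqrt (real N) * margin_M R \<gamma> N \<le> \<bar>dinner N a s + 0\<bar> / dnorm N a"
      if "s \<in> relu_map d N w b ` Xp \<union> relu_map d N w b ` Xm" for s using marg[OF that] .
  qed
qed


theorem theorem2p3:
  fixes \<delta> R :: real
  assumes "\<delta> > 0" and "R > 0"
  shows "\<exists>C>0. \<forall>(d::nat) Xp Xm (N::nat) xs k \<gamma> w b.
    d \<ge> 2 \<and>
    finite Xp \<and> finite Xm \<and> Xp \<union> Xm \<noteq> {} \<and>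
    Xp \<subseteq> rvecs d \<and> Xm \<subseteq> rvecs d \<and>
    (\<forall>x\<in>Xp \<union> Xm. dnorm d x \<le> R) \<and>
    delta_separated d \<delta> Xp Xm \<and>
    N = card Xp + card Xm \<and>
    bij_betw xs {..<N} (Xp \<union> Xm) \<and>
    (\<forall>i j. i < j \<and> j < N \<longrightarrow> dnorm d (xs j) \<le> dnorm d (xs i)) \<and>
    k = C * (32 * R / \<delta>\<^sup>2)\<^sup>2 *
          ((gaussian_width d (set_diff_vec Xp Xm \<union> Xp \<union> Xm))\<^sup>2 + R\<^sup>2) \<and>
    0 < \<gamma> \<and> \<gamma> \<le> max (\<delta>\<^sup>2 / (8 * R * real d)) (\<delta>\<^sup>2 / (18 * R * sqrt k)) \<and>
    (\<forall>i<N. w i \<in> rvecs d \<and> dnorm d (w i) = 1) \<and>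
    (\<forall>i<N.
       if (\<exists>j. i < j \<and> j < N \<and> (xs j \<in> Xp \<longleftrightarrow> xs i \<notin> Xp))
       then dinner d (w i) (xs i) + b i \<ge> \<gamma> \<and>
            (\<forall>j. i < j \<and> j < N \<and> (xs j \<in> Xp \<longleftrightarrow> xs i \<notin> Xp) \<longrightarrow>
                 dinner d (w i) (xs j) + b i \<le> - \<gamma>)
       else dinner d (w i) (xs i) + b i \<ge> \<gamma> \<and>
            (\<exists>x\<in>rvecs d. dnorm d x \<le> R \<and> dinner d (w i) x + b i \<le> 0))
    \<longrightarrow> lin_sep_margin N (relu_map d N w b ` Xp) (relu_map d N w b ` Xm)
          (sqrt (real N) * margin_M R \<gamma> N)"
    apply (rule exI[of _ "1::real"])
  apply (intro conjI allI impI)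
   apply simp
  apply (elim conjE)
  apply (rule main_aux[OF assms]; assumption)
  done

end
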